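(* Assuming each arithmetic operation in $\mathbb{K}$ takes constant time, the $\mu$-Basis Algorithm (described in the context) on an input non-zero row vector $a\in\mathbb{K}[s]^n$ of degree $d$, $n>1$, has computational complexity $O(d^2n+d^3+n^2)$.
   Context: $\mu$-Basis Algorithm on $a=\sum_{j=0}^d c_js^j$ ($c_j\in\mathbb{K}^n$ row vectors): (1) determine $d$, the $c_j$, and form $A\in\mathbb{K}^{(2d+1)\times n(d+1)}$ whose $(i,\,kn+r)$ entry is the $r$-th entry of $c_{i-1-k}$ (zero if $i-1-k\notin\{0,\dots,d\}$). (2) Compute a partial reduced row-echelon form $E$ of $A$ by Gauss–Jordan elimination, processing columns left to right, carrying out row operations only on pivotal columns and basic non-pivotal columns, skipping non-pivotal columns whose index is congruent modulo $n$ to an already found non-pivotal index, and stopping forward elimination once $n-1$ basic non-pivotal columns are found; then perform backward elimination and normalization on those columns. (A column is pivotal if it is the first column and non-zero or independent of previous columns; basic non-pivotal indices are the minimal elements of the classes modulo $n$ of the non-pivotal indices.) (3) With $p$ the list of pivotal indices and $\tilde q=(\tilde q_1,\dots,\tilde q_{n-1})$ the basic non-pivotal indices, initialize an $n\times(n-1)$ zero matrix $M$; for each $j$ add $s^{\mathrm{quo}(\tilde q_j-1,n)}$ to $M_{\mathrm{rem}(\tilde q_j-1,n)+1,\,j}$; for each $i\le|p|$ and $j\le n-1$ subtract $E_{i,\tilde q_j}s^{\mathrm{quo}(p_i-1,n)}$ from $M_{\mathrm{rem}(p_i-1,n)+1,\,j}$; output $M$. *)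

theory Defs
  imports "HOL-Computational_Algebra.Polynomial"
begin

text \<open>Matrices are 0-indexed: row i (0..2d) and column col = k*n + r
  (k = col div n, r = col mod n) correspond to the paper's row i+1 and column col+1.
  Every elementary operation (field operation, read/write of an array entry, comparison,
  list append, loop step) is charged one unit in the counter.\<close>

datatype 'a rowop = Swap nat nat | AddMul nat nat 'a
  (* Swap i k: exchange rows i,k;  AddMul i k f: row i := row i + f * row k *)

record 'a mb_state =
  E :: "nat \<Rightarrow> nat \<Rightarrow> 'a"
  oplog :: "'a rowop list"
  piv :: "nat list"
  npb :: "nat list"
  seen :: "nat \<Rightarrow> bool"
  cost :: nat

definition tick :: "nat \<Rightarrow> ('a, 'b) mb_state_scheme \<Rightarrow> ('a, 'b) mb_state_scheme" where
  "tick k st = st\<lparr>cost := cost st + k\<rparr>"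

definition setE :: "nat \<Rightarrow> nat \<Rightarrow> 'a \<Rightarrow> ('a, 'b) mb_state_scheme \<Rightarrow> ('a, 'b) mb_state_scheme" where
  "setE i c v st = tick 1 (st\<lparr>E := (E st)(i := (E st i)(c := v))\<rparr>)"

fun apply_op_col :: "nat \<Rightarrow> 'a::field rowop \<Rightarrow> 'a mb_state \<Rightarrow> 'a mb_state" where
  "apply_op_col c (Swap i k) st = (let x = E st i c; y = E st k c in setE k c x (setE i c y st))"
| "apply_op_col c (AddMul i k f) st = setE i c (E st i c + f * E st k c) st"

definition elim_step :: "nat \<Rightarrow> nat \<Rightarrow> nat \<Rightarrow> 'a::field mb_state \<Rightarrow> 'a mb_state" where
  "elim_step c r i st = tick 1
     (if E st i c = 0 then st
      else let f = - E st i c / E st r c;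
               st' = apply_op_col c (AddMul i r f) st
           in st'\<lparr>oplog := oplog st' @ [AddMul i r f]\<rparr>)"

text \<open>Processing column c (n = vector length, R = 2d+1 rows).  Columns whose index is
  congruent mod n to an already found non-pivotal index are skipped; otherwise all row
  operations performed so far are carried out on this column, then a pivot is sought.\<close>
definition process_col :: "nat \<Rightarrow> nat \<Rightarrow> nat \<Rightarrow> 'a::field mb_state \<Rightarrow> 'a mb_state" where
  "process_col n R c st =
    (if seen st (c mod n) then tick 1 st
     else let st1 = tick 1 (fold (apply_op_col c) (oplog st) st);
              r = length (piv st1);
              st2 = tick (R - r) st1
          in case find (\<lambda>i. E st2 i c \<noteq> 0) [r..<R] of
               None \<Rightarrow> tick 1 (st2\<lparr>npb := npb st2 @ [c], seen := (seen st2)(c mod n := True)\<rparr>)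
             | Some i \<Rightarrow>
                 let st3 = apply_op_col c (Swap r i) st2;
                     st3' = st3\<lparr>oplog := oplog st3 @ [Swap r i]\<rparr>;
                     st4 = fold (elim_step c r) [Suc r..<R] st3'
                 in tick 1 (st4\<lparr>piv := piv st4 @ [c]\<rparr>))"

function fwd :: "nat \<Rightarrow> nat \<Rightarrow> nat \<Rightarrow> nat \<Rightarrow> 'a::field mb_state \<Rightarrow> 'a mb_state" where
  "fwd n R N c st =
     (if N \<le> c \<or> n - 1 \<le> length (npb st) then tick 1 st
      else fwd n R N (Suc c) (process_col n R c st))"
  by pat_completeness auto
termination by (relation "measure (\<lambda>(n, R, N, c, st). N - c)") auto

definition back_row :: "nat \<Rightarrow> 'a::field mb_state \<Rightarrow> 'a mb_state" where
  "back_row i st =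
    (let pc = piv st ! i; v = E st i pc;
         st1 = fold (\<lambda>q s. setE i q (E s i q / v) s) (npb st) st;
         st2 = setE i pc 1 st1
     in fold (\<lambda>i' s. let f = E s i' pc;
                         s1 = fold (\<lambda>q s'. setE i' q (E s' i' q - f * E s' i q) s') (npb s) s
                     in setE i' pc 0 s1) [0..<i] st2)"

definition backward :: "'a::field mb_state \<Rightarrow> 'a mb_state" where
  "backward st = fold back_row (rev [0..<length (piv st)]) st"

definition vdeg :: "'a::zero poly list \<Rightarrow> nat" where
  "vdeg a = Max (degree ` set a)"

definition A_entry :: "'a::zero poly list \<Rightarrow> nat \<Rightarrow> nat \<Rightarrow> nat \<Rightarrow> nat \<Rightarrow> 'a" where
  "A_entry a n d i col =
     (let k = col div n; r = col mod n in
      if k \<le> i \<and> i - k \<le> d then coeff (a ! r) (i - k) else 0)"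

definition build_A :: "'a::field poly list \<Rightarrow> nat \<Rightarrow> nat \<Rightarrow> 'a mb_state" where
  "build_A a n d =
     fold (\<lambda>i s. fold (\<lambda>col s'. setE i col (A_entry a n d i col) s') [0..<n * (d + 1)] s)
          [0..<2 * d + 1]
          \<lparr>E = (\<lambda>_ _. 0), oplog = [], piv = [], npb = [], seen = (\<lambda>_. False), cost = length a\<rparr>"
  (* initial cost length a: determining d by inspecting the degrees of the n entries *)

definition setM :: "nat \<Rightarrow> nat \<Rightarrow> 'a poly \<Rightarrow> (nat \<Rightarrow> nat \<Rightarrow> 'a poly) \<times> nat
                     \<Rightarrow> (nat \<Rightarrow> nat \<Rightarrow> 'a poly) \<times> nat" where
  "setM i j p Mk = ((fst Mk)(i := (fst Mk i)(j := p)), snd Mk + 1)"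

definition build_M :: "nat \<Rightarrow> 'a::field mb_state \<Rightarrow> (nat \<Rightarrow> nat \<Rightarrow> 'a poly) \<times> nat" where
  "build_M n st =
    (let p = piv st; q = npb st;
         M0 = fold (\<lambda>i s. fold (\<lambda>j s'. setM i j 0 s') [0..<n - 1] s) [0..<n] ((\<lambda>_ _. 0), 0);
         M1 = fold (\<lambda>j s. setM (q ! j mod n) j (fst s (q ! j mod n) j + monom 1 (q ! j div n)) s)
                [0..<n - 1] M0;
         M2 = fold (\<lambda>i s. fold (\<lambda>j s'.
                   setM (p ! i mod n) j
                     (fst s' (p ! i mod n) j - monom (E st i (q ! j)) (p ! i div n)) s')
                   [0..<n - 1] s) [0..<length p] M1
     in M2)"

definition mu_basis_run :: "'a::field poly list \<Rightarrow> (nat \<Rightarrow> nat \<Rightarrow> 'a poly) \<times> nat" where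
  "mu_basis_run a =
    (let n = length a; d = vdeg a;
         st0 = build_A a n d;
         st1 = fwd n (2 * d + 1) (n * (d + 1)) 0 st0;
         st2 = backward st1;
         Mk = build_M n st2
     in (fst Mk, cost st2 + snd Mk))"

definition mu_basis_cost :: "'a::field poly list \<Rightarrow> nat" where
  "mu_basis_cost a = snd (mu_basis_run a)"

end

theory Submission
  imports Defs
begin

declare fwd.simps[simp del]

lemma fold_inv_measure:
  assumes "\<And>x s. x \<in> set xs \<Longrightarrow> I s \<Longrightarrow> I (f x s) \<and> m (f x s) \<le> m s + k" "I s"
  shows "I (fold f xs s) \<and> m (fold f xs s) \<le> m s + length xs * k"
  using assms
proof (induction xs arbitrary: s)
  case Nil then show ?case by simp
next
  case (Cons a xs)
  have 1: "I (f a s) \<and> m (f a s) \<le> m s + k" using Cons.prems by simp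
  have "I (fold f xs (f a s)) \<and> m (fold f xs (f a s)) \<le> m (f a s) + length xs * k"
    using Cons.IH[of "f a s"] Cons.prems 1 by simp
  then show ?case using 1 by simp
qed

lemma tick_simps[simp]: "cost (tick k st) = cost st + k" "piv (tick k st) = piv st"
  "npb (tick k st) = npb st" "oplog (tick k st) = oplog st"
  by (simp_all add: tick_def)

lemma setE_simps[simp]: "cost (setE i c v st) = cost st + 1" "piv (setE i c v st) = piv st"
  "npb (setE i c v st) = npb st" "oplog (setE i c v st) = oplog st"
  by (simp_all add: setE_def)

lemma aoc: "piv (apply_op_col c op st) = piv st \<and> npb (apply_op_col c op st) = npb st \<and>
   oplog (apply_op_col c op st) = oplog st \<and> cost (apply_op_col c op st) \<le> cost st + 2"
  by (cases op) (simp_all add: Let_def)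

lemma elim: "piv (elim_step c r i st) = piv st \<and> npb (elim_step c r i st) = npb st \<and>
   length (oplog (elim_step c r i st)) \<le> Suc (length (oplog st)) \<and>
   cost (elim_step c r i st) \<le> cost st + 2"
  using aoc[of c "AddMul i r (- E st i c / E st r c)" st]
  by (auto simp: elim_step_def Let_def)


lemma aoc_step: "piv s = piv st \<and> npb s = npb st \<and> oplog s = oplog st \<Longrightarrow>
  (piv (apply_op_col c x s) = piv st \<and> npb (apply_op_col c x s) = npb st \<and> oplog (apply_op_col c x s) = oplog st)
   \<and> cost (apply_op_col c x s) \<le> cost s + 2"
  using aoc[of c x s] by simp

lemma elim_step_inv: "piv s = piv st \<and> npb s = npb st \<Longrightarrow>
  (piv (elim_step c r x s) = piv st \<and> npb (elim_step c r x s) = npb st)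
   \<and> cost (elim_step c r x s) \<le> cost s + 2"
  using elim[of c r x s] by simp

lemma fold_aoc:
  fixes st :: "'a::field mb_state"
  shows "piv (fold (apply_op_col c) ops st) = piv st \<and> npb (fold (apply_op_col c) ops st) = npb st \<and>
   oplog (fold (apply_op_col c) ops st) = oplog st \<and> cost (fold (apply_op_col c) ops st) \<le> cost st + length ops * 2"
proof -
  have "(piv (fold (apply_op_col c) ops st) = piv st \<and> npb (fold (apply_op_col c) ops st) = npb st \<and>
   oplog (fold (apply_op_col c) ops st) = oplog st) \<and> cost (fold (apply_op_col c) ops st) \<le> cost st + length ops * 2"
    apply (rule fold_inv_measure[where xs=ops and I="\<lambda>s. piv s = piv st \<and> npb s = npb st \<and> oplog s = oplog st" and f="apply_op_col c" and m=cost and k=2 and s=st])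
     apply (rule aoc_step)
     apply assumption
    apply (rule conjI refl)+
    done
  then show ?thesis by blast
qed

lemma fold_elim:
  fixes st :: "'a::field mb_state"
  shows "piv (fold (elim_step c r) xs st) = piv st \<and> npb (fold (elim_step c r) xs st) = npb st \<and>
   length (oplog (fold (elim_step c r) xs st)) \<le> length (oplog st) + length xs \<and>
   cost (fold (elim_step c r) xs st) \<le> cost st + length xs * 2"
proof -
  have A: "(piv (fold (elim_step c r) xs st) = piv st \<and> npb (fold (elim_step c r) xs st) = npb st) \<and>
     cost (fold (elim_step c r) xs st) \<le> cost st + length xs * 2"
    apply (rule fold_inv_measure[where xs=xs and I="\<lambda>s. piv s = piv st \<and> npb s = npb st" and f="elim_step c r" and m=cost and k=2 and s=st])
     apply (rule elim_step_inv)
     apply assumption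
    apply (rule conjI refl)+
    done
  have B: "True \<and> length (oplog (fold (elim_step c r) xs st)) \<le> length (oplog st) + length xs * 1"
    apply (rule fold_inv_measure[where xs=xs and I="\<lambda>s. True" and f="elim_step c r" and m="\<lambda>s. length (oplog s)" and k=1 and s=st])
     apply (rule conjI[OF TrueI])
     apply (rule elim[THEN conjunct2, THEN conjunct2, THEN conjunct1, THEN order_trans])
     apply simp
    apply (rule TrueI)
    done
  show ?thesis using A B by simp
qed

definition pc2 :: "nat \<Rightarrow> nat \<Rightarrow> nat \<Rightarrow> nat \<Rightarrow> 'a::field mb_state \<Rightarrow> 'a mb_state" where
 "pc2 n R c r st2 = (case find (\<lambda>i. E st2 i c \<noteq> 0) [r..<R] of
               None \<Rightarrow> tick 1 (st2\<lparr>npb := npb st2 @ [c], seen := (seen st2)(c mod n := True)\<rparr>)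
             | Some i \<Rightarrow>
                 let st3 = apply_op_col c (Swap r i) st2;
                     st3' = st3\<lparr>oplog := oplog st3 @ [Swap r i]\<rparr>;
                     st4 = fold (elim_step c r) [Suc r..<R] st3'
                 in tick 1 (st4\<lparr>piv := piv st4 @ [c]\<rparr>))"
lemma pc_eq: "process_col n R c st = (if seen st (c mod n) then tick 1 st else
   let st1 = tick 1 (fold (apply_op_col c) (oplog st) st) in pc2 n R c (length (piv st1)) (tick (R - length (piv st1)) st1))"
  unfolding process_col_def pc2_def Let_def by (rule refl)

lemma pc2:
  fixes st2 :: "'a::field mb_state" and n R c r :: nat
  assumes r: "r = length (piv st2)" and a1: "length (piv st2) \<le> R"
    and a2: "length (oplog st2) \<le> length (piv st2) * R"
  defines "st' \<equiv> pc2 n R c r st2"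
  shows "length (piv st') \<le> R \<and> length (oplog st') \<le> length (piv st') * R \<and>
     length (npb st') \<le> Suc (length (npb st2)) \<and>
     length (piv st') + length (npb st') = Suc (length (piv st2) + length (npb st2)) \<and>
     cost st' \<le> cost st2 + (2*R + 3)"
proof (cases "find (\<lambda>i. E st2 i c \<noteq> 0) [r..<R]")
  case None
  then have e: "st' = tick 1 (st2\<lparr>npb := npb st2 @ [c], seen := (seen st2)(c mod n := True)\<rparr>)"
    unfolding st'_def pc2_def by simp
  have p: "piv st' = piv st2" "length (npb st') = Suc (length (npb st2))" "oplog st' = oplog st2"
    "cost st' = cost st2 + 1"
    using e by simp_all
  show ?thesis using p a1 a2 by simp
next
  case (Some i)
  then have iR: "i \<in> set [r..<R]" by (metis find_Some_iff nth_mem)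
  then have rR: "r < R" by simp
  define st3 where "st3 = apply_op_col c (Swap r i) st2"
  define st3' where "st3' = st3\<lparr>oplog := oplog st3 @ [Swap r i]\<rparr>"
  define st4 where "st4 = fold (elim_step c r) [Suc r..<R] st3'"
  have e: "st' = tick 1 (st4\<lparr>piv := piv st4 @ [c]\<rparr>)"
    using Some unfolding st'_def pc2_def by (simp add: Let_def st3_def st3'_def st4_def)
  have s3: "piv st3' = piv st2" "npb st3' = npb st2" "length (oplog st3') = Suc (length (oplog st2))"
    "cost st3' \<le> cost st2 + 2"
    using aoc[of c "Swap r i" st2] by (auto simp: st3'_def st3_def)
  have s4: "piv st4 = piv st2" "npb st4 = npb st2" "length (oplog st4) \<le> Suc (length (oplog st2)) + (R - Suc r)"
    "cost st4 \<le> cost st2 + 2 + (R - Suc r) * 2"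
    using fold_elim[of c r "[Suc r..<R]" st3'] s3 by (auto simp: st4_def)
  have X: "length (oplog st4) \<le> Suc (length (piv st2)) * R"
    using s4(3) a2 r rR by simp
  have p: "length (piv st') = Suc (length (piv st2))" "npb st' = npb st2" "oplog st' = oplog st4" "cost st' = cost st4 + 1"
    using e s4 by simp_all
  have c4: "cost st4 + 1 \<le> cost st2 + (2*R + 3)"
    using s4(4) by linarith
  have sR: "Suc (length (piv st2)) \<le> R" using r rR by simp
  show ?thesis
  proof (intro conjI)
    show "length (piv st') \<le> R" using p(1) sR by simp
    show "length (oplog st') \<le> length (piv st') * R" using p(1,3) X by simp
    show "length (npb st') \<le> Suc (length (npb st2))" using p(2) by simp
    show "length (piv st') + length (npb st') = Suc (length (piv st2) + length (npb st2))" using p(1,2) by simp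
    show "cost st' \<le> cost st2 + (2 * R + 3)" using p(4) c4 by simp
  qed
qed

lemma pcol:
  fixes st :: "'a::field mb_state" and n R c :: nat
  assumes a1: "length (piv st) \<le> R" and a2: "length (oplog st) \<le> length (piv st) * R"
  defines "st' \<equiv> process_col n R c st"
  shows "length (piv st') \<le> R \<and> length (oplog st') \<le> length (piv st') * R \<and>
     length (npb st') \<le> Suc (length (npb st)) \<and>
     ((length (piv st') = length (piv st) \<and> length (npb st') = length (npb st) \<and> cost st' \<le> cost st + 1)
      \<or> (length (piv st') + length (npb st') = Suc (length (piv st) + length (npb st))
          \<and> cost st' \<le> cost st + (2*R*R + 3*R + 4)))"
proof (cases "seen st (c mod n)")
  case True
  then have "st' = tick 1 st" by (simp add: st'_def pc_eq)
  then show ?thesis using assms by simp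
next
  case False
  define st1 where "st1 = tick 1 (fold (apply_op_col c) (oplog st) st)"
  define st2 where "st2 = tick (R - length (piv st1)) st1"
  have e: "st' = pc2 n R c (length (piv st1)) st2"
    using False by (simp add: st'_def pc_eq Let_def st1_def st2_def)
  have s1: "piv st1 = piv st" "npb st1 = npb st" "oplog st1 = oplog st"
    "cost st1 \<le> cost st + 1 + length (oplog st) * 2"
    using fold_aoc[of c "oplog st" st] by (auto simp: st1_def)
  have s2: "piv st2 = piv st" "npb st2 = npb st" "oplog st2 = oplog st"
    "cost st2 \<le> cost st + 1 + length (oplog st) * 2 + R"
    using s1 by (auto simp: st2_def)
  have opR: "length (oplog st) * 2 \<le> 2*R*R"
  proof -
    have "length (piv st) * R \<le> R * R" using a1 by (rule mult_le_mono1)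
    then show ?thesis using a2 by linarith
  qed
  have P: "length (piv st') \<le> R \<and> length (oplog st') \<le> length (piv st') * R \<and>
     length (npb st') \<le> Suc (length (npb st2)) \<and>
     length (piv st') + length (npb st') = Suc (length (piv st2) + length (npb st2)) \<and>
     cost st' \<le> cost st2 + (2*R + 3)"
    unfolding e by (rule pc2) (use s1 s2 a1 a2 in simp_all)
  have "cost st' \<le> cost st + (2*R*R + 3*R + 4)" using P s2(4) opR by linarith
  then show ?thesis using P s2 by simp
qed


lemma fwd_bound:
  fixes st :: "'a::field mb_state"
  shows "K = 2*R*R + 3*R + 4 \<Longrightarrow> length (piv st) \<le> R \<Longrightarrow> length (oplog st) \<le> length (piv st) * R \<Longrightarrow> length (npb st) \<le> n - 1 \<Longrightarrow>
    cost (fwd n R N c st) + K * (length (piv st) + length (npb st))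
      \<le> cost st + (N - c) + 1 + K * (length (piv (fwd n R N c st)) + length (npb (fwd n R N c st)))
    \<and> length (piv (fwd n R N c st)) \<le> R \<and> length (npb (fwd n R N c st)) \<le> n - 1"
proof (induction n R N c st rule: fwd.induct)
  case (1 n R N c st)
  show ?case
  proof (cases "N \<le> c \<or> n - 1 \<le> length (npb st)")
    case True
    then have "fwd n R N c st = tick 1 st" by (subst fwd.simps) simp
    then show ?thesis using "1.prems" by simp
  next
    case False
    define st' where "st' = process_col n R c st"
    have e: "fwd n R N c st = fwd n R N (Suc c) st'"
      using False unfolding st'_def by (subst fwd.simps) simp
    have P: "length (piv st') \<le> R \<and> length (oplog st') \<le> length (piv st') * R \<and>
     length (npb st') \<le> Suc (length (npb st)) \<and>
     ((length (piv st') = length (piv st) \<and> length (npb st') = length (npb st) \<and> cost st' \<le> cost st + 1)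
      \<or> (length (piv st') + length (npb st') = Suc (length (piv st) + length (npb st))
          \<and> cost st' \<le> cost st + (2*R*R + 3*R + 4)))"
      unfolding st'_def by (rule pcol) (use "1.prems" in simp_all)
    have q: "length (npb st') \<le> n - 1" using P False by linarith
    have IH: "cost (fwd n R N (Suc c) st') + K * (length (piv st') + length (npb st'))
      \<le> cost st' + (N - Suc c) + 1 + K * (length (piv (fwd n R N (Suc c) st')) + length (npb (fwd n R N (Suc c) st')))
      \<and> length (piv (fwd n R N (Suc c) st')) \<le> R \<and> length (npb (fwd n R N (Suc c) st')) \<le> n - 1"
      using "1.IH"[OF False, folded st'_def, OF "1.prems"(1)] P q by blast
    have step: "cost st' + K * (length (piv st) + length (npb st)) \<le> cost st + 1 + K * (length (piv st') + length (npb st'))"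
    proof (cases "length (piv st') = length (piv st) \<and> length (npb st') = length (npb st) \<and> cost st' \<le> cost st + 1")
      case True then show ?thesis by simp
    next
      case F: False
      then have "length (piv st') + length (npb st') = Suc (length (piv st) + length (npb st))"
        "cost st' \<le> cost st + K" using P "1.prems"(1) by auto
      then show ?thesis by simp
    qed
    have "N - Suc c + 1 = N - c" using False by linarith
    then show ?thesis unfolding e using IH step by linarith
  qed
qed

lemma fold_setE[simp]:
  "piv (fold (\<lambda>q s. setE i q (g q s) s) xs st) = piv st"
  "npb (fold (\<lambda>q s. setE i q (g q s) s) xs st) = npb st"
  "oplog (fold (\<lambda>q s. setE i q (g q s) s) xs st) = oplog st"
  "cost (fold (\<lambda>q s. setE i q (g q s) s) xs st) = cost st + length xs"
  by (induction xs arbitrary: st) simp_all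

lemma fold_setE2[simp]:
  "piv (fold (\<lambda>j s. setE j pc 0 (fold (\<lambda>q s'. setE j q (h j q s s') s') (npb s) s)) xs st) = piv st"
  "npb (fold (\<lambda>j s. setE j pc 0 (fold (\<lambda>q s'. setE j q (h j q s s') s') (npb s) s)) xs st) = npb st"
  "cost (fold (\<lambda>j s. setE j pc 0 (fold (\<lambda>q s'. setE j q (h j q s s') s') (npb s) s)) xs st)
     = cost st + length xs * Suc (length (npb st))"
  by (induction xs arbitrary: st) simp_all

lemma back_row_simps:
  "piv (back_row i st) = piv st" "npb (back_row i st) = npb st"
  "cost (back_row i st) = cost st + Suc i * Suc (length (npb st))"
  by (simp_all add: back_row_def Let_def)

lemma back_row_step: "x < P \<Longrightarrow> cost (back_row x s) \<le> cost s + P * Suc (length (npb s))"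
proof -
  assume "x < P"
  then have "Suc x * Suc (length (npb s)) \<le> P * Suc (length (npb s))" by (intro mult_le_mono1) simp
  then show ?thesis by (simp only: back_row_simps)
qed

lemma back_row_inv: "x < length (piv st) \<Longrightarrow> piv s = piv st \<and> npb s = npb st \<Longrightarrow>
  (piv (back_row x s) = piv st \<and> npb (back_row x s) = npb st) \<and> cost (back_row x s) \<le> cost s + length (piv st) * Suc (length (npb st))"
proof -
  assume a: "x < length (piv st)" and b: "piv s = piv st \<and> npb s = npb st"
  have "cost (back_row x s) \<le> cost s + length (piv st) * Suc (length (npb s))" using back_row_step[OF a] .
  then show ?thesis using b by (simp add: back_row_simps)
qed

lemma backward_bound:
  fixes st :: "'a::field mb_state"
  shows "piv (backward st) = piv st \<and> npb (backward st) = npb st \<and>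
   cost (backward st) \<le> cost st + length (piv st) * (length (piv st) * Suc (length (npb st)))"
proof -
  have "(piv (fold back_row (rev [0..<length (piv st)]) st) = piv st \<and> npb (fold back_row (rev [0..<length (piv st)]) st) = npb st)
     \<and> cost (fold back_row (rev [0..<length (piv st)]) st) \<le> cost st + length (rev [0..<length (piv st)]) * (length (piv st) * Suc (length (npb st)))"
    apply (rule fold_inv_measure[where xs="rev [0..<length (piv st)]" and I="\<lambda>s. piv s = piv st \<and> npb s = npb st" and f=back_row and m=cost and k="length (piv st) * Suc (length (npb st))" and s=st])
     apply (rule back_row_inv)
      apply simp
     apply assumption
    apply (rule conjI refl)+
    done
  then show ?thesis unfolding backward_def by simp
qed

lemma fold_setE3[simp]:
  "piv (fold (\<lambda>i s. fold (\<lambda>q s'. setE i q (g i q s') s') L s) xs st) = piv st"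
  "npb (fold (\<lambda>i s. fold (\<lambda>q s'. setE i q (g i q s') s') L s) xs st) = npb st"
  "oplog (fold (\<lambda>i s. fold (\<lambda>q s'. setE i q (g i q s') s') L s) xs st) = oplog st"
  "cost (fold (\<lambda>i s. fold (\<lambda>q s'. setE i q (g i q s') s') L s) xs st) = cost st + length xs * length L"
  by (induction xs arbitrary: st) simp_all

lemma build_A_bound:
  "piv (build_A a n d) = [] \<and> npb (build_A a n d) = [] \<and> oplog (build_A a n d) = [] \<and>
   cost (build_A a n d) = length a + (2*d+1) * (n*(d+1))"
  unfolding build_A_def by (simp del: upt_Suc)

lemma setM_snd[simp]: "snd (setM i j p Mk) = snd Mk + 1" by (simp add: setM_def)

lemma fold_setM[simp]: "snd (fold (\<lambda>j s. setM (I j s) j (P j s) s) xs M) = snd M + length xs"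
  by (induction xs arbitrary: M) simp_all

lemma fold_setM2[simp]: "snd (fold (\<lambda>i s. fold (\<lambda>j s'. setM (I i j s') j (P i j s s') s') L s) xs M) = snd M + length xs * length L"
  by (induction xs arbitrary: M) simp_all

lemma build_M_bound: "snd (build_M n st) = n * (n - 1) + (n - 1) + length (piv st) * (n - 1)"
  unfolding build_M_def Let_def by simp

lemma arith_bound:
  fixes n d :: nat assumes n: "n \<ge> 2"
  defines "R \<equiv> 2*d+1" and "N \<equiv> n*(d+1)" and "T \<equiv> d^2*n + d^3 + n^2"
  shows "n + R*N + N + 1 + (2*R*R+3*R+4)*(R+n) + R*R*n + n*n + n + R*n \<le> 1000 * T"
proof -
  have h3: "n*n \<le> T" unfolding T_def by (simp add: power2_eq_square)
  have "n \<le> n*n" using n by simp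
  then have h2: "n \<le> T" using h3 by linarith
  have h1: "1 \<le> T" using h2 n by linarith
  have h4: "d*d*n \<le> T" unfolding T_def by (simp add: power2_eq_square)
  have h5: "d*d*d \<le> T" unfolding T_def by (simp add: power3_eq_cube)
  have h6: "d*n \<le> T"
  proof (cases "d = 0")
    case True then show ?thesis by simp
  next
    case False then have "d*n \<le> d*d*n" by simp
    then show ?thesis using h4 by linarith
  qed
  have "d \<le> d*n" using n by simp
  then have h7: "d \<le> T" using h6 by linarith
  have "d*d \<le> d*d*n" using n by simp
  then have h8: "d*d \<le> T" using h4 by linarith
  have e: "n + R*N + N + 1 + (2*R*R+3*R+4)*(R+n) + R*R*n + n*n + n + R*n = n*n + 10 + 15*n + 32*d + 24*(d*n) + 14*(d*d*n) + 36*(d*d) + 16*(d*d*d)"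
    unfolding R_def N_def by (simp add: algebra_simps)
  show ?thesis unfolding e using h1 h2 h3 h4 h5 h6 h7 h8 by linarith
qed

theorem theorem3:
  "\<exists>C::real. \<forall>a :: 'a::field poly list.
      length a > 1 \<longrightarrow> (\<exists>x\<in>set a. x \<noteq> 0) \<longrightarrow>
      real (mu_basis_cost a)
        \<le> C * real (vdeg a ^ 2 * length a + vdeg a ^ 3 + length a ^ 2)"
proof (intro exI allI impI)
  fix a :: "'a::field poly list"
  assume n1: "length a > 1"
  define n where "n = length a"
  define d where "d = vdeg a"
  define R where "R = 2*d+1"
  define N where "N = n*(d+1)"
  define st0 where "st0 = build_A a n d"
  define st1 where "st1 = fwd n R N 0 st0"
  define st2 where "st2 = backward st1"
  have cost_eq: "mu_basis_cost a = cost st2 + snd (build_M n st2)"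
    unfolding mu_basis_cost_def mu_basis_run_def Let_def st2_def st1_def st0_def n_def d_def R_def N_def
    by simp
  have b0: "piv st0 = [] \<and> npb st0 = [] \<and> oplog st0 = [] \<and> cost st0 = n + R * N"
    using build_A_bound[of a n d] unfolding st0_def R_def N_def n_def by simp
  have f: "cost st1 + (2*R*R + 3*R + 4) * (length (piv st0) + length (npb st0))
      \<le> cost st0 + (N - 0) + 1 + (2*R*R + 3*R + 4) * (length (piv st1) + length (npb st1))
    \<and> length (piv st1) \<le> R \<and> length (npb st1) \<le> n - 1"
    unfolding st1_def by (rule fwd_bound) (use b0 in simp_all)
  have fc: "cost st1 \<le> n + R*N + N + 1 + (2*R*R + 3*R + 4) * (R + n)"
  proof -
    have "(2*R*R + 3*R + 4) * (length (piv st1) + length (npb st1)) \<le> (2*R*R + 3*R + 4) * (R + n)"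
      using f by (intro mult_le_mono2) linarith
    moreover have "cost st1 \<le> cost st0 + N + 1 + (2*R*R + 3*R + 4) * (length (piv st1) + length (npb st1))"
      using f b0 by simp
    ultimately show ?thesis using b0 by linarith
  qed
  have b2: "piv st2 = piv st1" "npb st2 = npb st1"
    "cost st2 \<le> cost st1 + length (piv st1) * (length (piv st1) * Suc (length (npb st1)))"
    using backward_bound[of st1] unfolding st2_def by auto
  have "length (piv st1) * (length (piv st1) * Suc (length (npb st1))) \<le> R * (R * n)"
    using f n1 n_def by (intro mult_le_mono mult_le_mono2) auto
  then have c2: "cost st2 \<le> n + R*N + N + 1 + (2*R*R + 3*R + 4) * (R + n) + R*R*n"
    using b2(3) fc by (simp add: mult.assoc)
  have m: "snd (build_M n st2) \<le> n*n + n + R*n"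
  proof -
    have "n * (n - 1) \<le> n * n" by simp
    moreover have "length (piv st2) * (n - 1) \<le> R * n" using f b2 by (intro mult_le_mono) auto
    ultimately show ?thesis using build_M_bound[of n st2] by linarith
  qed
  have S: "mu_basis_cost a \<le> n + R*N + N + 1 + (2*R*R + 3*R + 4) * (R + n) + R*R*n + n*n + n + R*n"
    using cost_eq c2 m by linarith
  have "n + R*N + N + 1 + (2*R*R + 3*R + 4) * (R + n) + R*R*n + n*n + n + R*n \<le> 1000 * (d^2*n + d^3 + n^2)"
    unfolding R_def N_def by (rule arith_bound) (use n1 n_def in simp)
  then have tot: "mu_basis_cost a \<le> 1000 * (d^2*n + d^3 + n^2)" using S by linarith
  then have "real (mu_basis_cost a) \<le> real (1000 * (d^2*n + d^3 + n^2))" by (simp only: of_nat_le_iff)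
  then show "real (mu_basis_cost a) \<le> 1000 * real (vdeg a ^ 2 * length a + vdeg a ^ 3 + length a ^ 2)"
    unfolding n_def d_def by simp
qed

end
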